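(* Let $P\in N_1$ be a sum of $9$ monomials, not necessarily distinct (i.e. $P(1)=9$). Then $P$ has unique factorisation inside $N_1$: any two factorisations of $P$ into irreducible elements of $N_1$ coincide up to the order of the factors.
   Context: $N_1=\mathbb{Z}_{\ge0}[X]$ is the semiring of univariate polynomials with nonnegative integer coefficients. An element $Q\neq0,1$ of $N_1$ is irreducible if in every factorisation $Q=ST$ with $S,T\in N_1$ one of $S,T$ is $1$. *)

theory Defs
  imports "HOL-Computational_Algebra.Polynomial" "HOL-Library.Multiset"
begin

text \<open>N_1 = Z_{>=0}[X] is modelled by the type nat poly.
  An element Q /= 0,1 of N_1 is irreducible if in every factorisation Q = S T
  with S, T in N_1 one of S, T is 1.\<close>

definition irreducible_N1 :: "nat poly \<Rightarrow> bool" where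
  "irreducible_N1 Q \<longleftrightarrow> Q \<noteq> 0 \<and> Q \<noteq> 1 \<and> (\<forall>S T. Q = S * T \<longrightarrow> S = 1 \<or> T = 1)"

end

theory Submission
  imports Defs
begin

definition pm :: "nat multiset \<Rightarrow> nat poly" where
  "pm N = sum_mset (image_mset (\<lambda>x. monom 1 x) N)"

definition E :: "nat poly \<Rightarrow> nat multiset" where
  "E Q = Abs_multiset (coeff Q)"

lemma coeff_pm: "coeff (pm N) k = count N k"
  by (induction N) (auto simp: pm_def)

lemma poly_pm: "poly (pm N) 1 = size N"
  by (induction N) (auto simp: pm_def poly_monom)

lemma count_E: "count (E Q) = coeff Q"
proof -
  have "{x. coeff Q x > 0} \<subseteq> {..degree Q}"
    using le_degree by (auto simp: subset_eq)
  then have "finite {x. coeff Q x > 0}" using finite_subset by blast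
  then show ?thesis unfolding E_def by (rule count_Abs_multiset)
qed

lemma pm_E: "pm (E Q) = Q"
  by (simp add: poly_eq_iff coeff_pm count_E)

lemma size_E: "size (E Q) = poly Q 1"
  by (metis pm_E poly_pm)

lemma poly1_0: "poly (Q::nat poly) 1 = 0 \<Longrightarrow> Q = 0"
  proof -
  assume "poly Q 1 = 0"
  then have "size (E Q) = 0" by (simp add: size_E)
  then have "E Q = {#}" by simp
  then show "Q = 0" by (metis pm_E pm_def image_mset_empty sum_mset.empty)
qed

lemma poly1_1: "poly (Q::nat poly) 1 = 1 \<Longrightarrow> \<exists>k. Q = monom 1 k"
proof -
  assume "poly Q 1 = 1"
  then have "size (E Q) = Suc 0" by (simp add: size_E)
  then obtain k where "E Q = {#k#}" using size_1_singleton_mset[of "E Q"] by auto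
  then have "Q = pm {#k#}" by (metis pm_E)
  then show ?thesis by (auto simp: pm_def)
qed

lemma poly1_3: assumes "poly (Q::nat poly) 1 = 3" "coeff Q 0 \<noteq> 0"
  shows "\<exists>a b. a \<le> b \<and> Q = pm {#0,a,b#}"
proof -
  have "0 \<in># E Q" using assms(2) by (simp add: count_E[symmetric])
  then obtain N where N: "E Q = add_mset 0 N" by (metis insert_DiffM)
  have "size N = 2" using N assms(1) size_E[of Q] by simp
  then obtain a N2 where "N = add_mset a N2" using size_eq_Suc_imp_eq_union[of N 1] by auto
  with \<open>size N = 2\<close> obtain b where "N = {#a,b#}" using size_1_singleton_mset[of N2] by auto
  then have "Q = pm {#0,a,b#}" by (metis pm_E N)
  then show ?thesis
  proof (cases "a \<le> b")
    case True then show ?thesis using \<open>Q = _\<close> by blast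
  next
    case False then show ?thesis using \<open>Q = _\<close>
      by (metis add_mset_commute nat_le_linear)
  qed
qed

lemma pm_mult: "pm {#0,a,b#} * pm {#0,c,d#} = pm {#0,a,b,c,d,a+c,a+d,b+c,b+d#}"
  by (simp add: pm_def algebra_simps mult_monom)

lemma comb:
  fixes a b c d a' b' c' d' :: nat
  assumes "a \<le> b" "c \<le> d" "a \<le> c" "a' \<le> b'" "c' \<le> d'" "a' \<le> c'"
   and eq: "{#0,a,b,c,d,a+c,a+d,b+c,b+d#} = {#0,a',b',c',d',a'+c',a'+d',b'+c',b'+d'#}"
  shows "(a=a' \<and> b=b' \<and> c=c' \<and> d=d') \<or> (a = c' \<and> b = d' \<and> c = a' \<and> d = b')"
proof -
  have e1: "{#a,b,c,d,a+c,a+d,b+c,b+d#} = {#a',b',c',d',a'+c',a'+d',b'+c',b'+d'#}"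
    using eq by simp
  have "a' \<in># {#a,b,c,d,a+c,a+d,b+c,b+d#}" unfolding e1 by simp
  then have "a \<le> a'" using assms by auto
  have "a \<in># {#a',b',c',d',a'+c',a'+d',b'+c',b'+d'#}" unfolding e1[symmetric] by simp
  then have "a' \<le> a" using assms by auto
  have "b'+d' \<in># {#a,b,c,d,a+c,a+d,b+c,b+d#}" unfolding e1 by simp
  then have "b'+d' \<le> b+d" using assms by auto
  have "b+d \<in># {#a',b',c',d',a'+c',a'+d',b'+c',b'+d'#}" unfolding e1[symmetric] by simp
  then have "b+d \<le> b'+d'" using assms by auto
  have "sum_mset {#a,b,c,d,a+c,a+d,b+c,b+d#} = sum_mset {#a',b',c',d',a'+c',a'+d',b'+c',b'+d'#}"
    using e1 by simp
  then have "c = c'" using \<open>a \<le> a'\<close> \<open>a' \<le> a\<close> \<open>b'+d' \<le> b+d\<close> \<open>b+d \<le> b'+d'\<close> by simp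
  have aa: "a' = a" using \<open>a \<le> a'\<close> \<open>a' \<le> a\<close> by simp
  have K: "b'+d' = b+d" using \<open>b'+d' \<le> b+d\<close> \<open>b+d \<le> b'+d'\<close> by simp
  have e2: "{#b,d,a+d,b+c#} + {#a,c,a+c,b+d#} = {#b',d',a+d',b'+c#} + {#a,c,a+c,b+d#}"
    using e1 unfolding aa \<open>c = c'\<close>[symmetric] K by (simp add: add_mset_commute)
  then have e3: "{#b,d,a+d,b+c#} = {#b',d',a+d',b'+c#}" by simp
  have "b' \<in># {#b,d,a+d,b+c#}" "d' \<in># {#b,d,a+d,b+c#}" unfolding e3 by simp_all
  then have m1: "min b d \<le> min b' d'" by auto
  have "b \<in># {#b',d',a+d',b'+c#}" "d \<in># {#b',d',a+d',b'+c#}" unfolding e3[symmetric] by simp_all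
  then have m2: "min b' d' \<le> min b d" by auto
  show ?thesis
  proof (cases "b = b'")
    case True
    then show ?thesis using K aa \<open>c = c'\<close> by simp
  next
    case False
    then have bd: "b = d'" "d = b'" using m1 m2 K by (auto simp: min_def split: if_splits)
    then have "{#b,d,a+d,b+c#} = {#b,d,a+b,d+c#}" using e3 by (simp add: add_mset_commute)
    then have "{#a+d,b+c#} = {#a+b,d+c#}" by simp
    then have "a = c" using False bd by (auto simp: add_eq_conv_ex)
    then show ?thesis using bd aa \<open>c = c'\<close> by simp
  qed
qed

lemma smult_Suc0: "smult (Suc 0) (q::nat poly) = q"
  by (metis One_nat_def smult_1_left)

lemma X_mult: "monom 1 1 * q = pCons 0 (q::nat poly)"
  by (simp add: monom_Suc monom_0 smult_Suc0)

lemma irr_const: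
  assumes "irreducible_N1 Q" "Q \<noteq> monom 1 1"
  shows "coeff Q 0 \<noteq> 0"
proof
  assume h: "coeff Q 0 = 0"
  obtain a q where Q: "Q = pCons a q" by (cases Q)
  with h have "Q = monom 1 1 * q" by (simp add: monom_Suc monom_0 smult_Suc0)
  with assms(1) have "monom 1 1 = (1::nat poly) \<or> q = 1" unfolding irreducible_N1_def by blast
  moreover have "monom 1 1 \<noteq> (1::nat poly)"
    by (metis coeff_monom one_poly_eq_simps(1) coeff_pCons_0 monom_Suc One_nat_def zero_neq_one)
  ultimately show False using \<open>Q = monom 1 1 * q\<close> assms(2) by auto
qed

lemma irr_val:
  assumes "irreducible_N1 Q" "Q \<noteq> monom 1 1"
  shows "poly Q 1 \<ge> 2"
proof -
  have "Q \<noteq> 0" using assms unfolding irreducible_N1_def by blast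
  then have "poly Q 1 \<noteq> 0" using poly1_0 by blast
  moreover have "poly Q 1 \<noteq> 1"
  proof
    assume "poly Q 1 = 1"
    then obtain k where k: "Q = monom 1 k" using poly1_1 by blast
    have "coeff Q 0 \<noteq> 0" using irr_const assms by blast
    then have "k = 0" using k by (auto split: if_splits)
    then have "Q = 1" using k by (simp add: one_pCons monom_0)
    then show False using assms unfolding irreducible_N1_def by blast
  qed
  ultimately show ?thesis by linarith
qed

lemma pow_bound: "(\<forall>x\<in>#M. (3::nat) \<le> f x) \<Longrightarrow> 3 ^ size M \<le> prod_mset (image_mset f M)"
proof (induction M)
  case empty then show ?case by simp
next
  case (add x M)
  then have "3 ^ size M \<le> prod_mset (image_mset f M)" "3 \<le> f x" by auto
  then show ?case by (simp add: mult_mono)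
qed

lemma poly_prod1: "poly (prod_mset A) (1::nat) = prod_mset (image_mset (\<lambda>p. poly p 1) A)"
  using poly_prod_mset[of "\<lambda>x. x" A 1] by simp

lemma measure_lt:
  assumes "S \<noteq> 0" "T \<noteq> (1::nat poly)" "T \<noteq> 0"
  shows "poly S 1 + degree S < poly (S*T) 1 + degree (S*T)"
proof -
  have dg: "degree (S*T) = degree S + degree T" using assms degree_mult_eq by blast
  have vS: "poly S 1 \<ge> 1" using assms(1) poly1_0 by (metis less_one not_le)
  have vT: "poly T 1 \<ge> 1" using assms(3) poly1_0 by (metis less_one not_le)
  show ?thesis
  proof (cases "poly T 1 = 1")
    case True
    then obtain k where k: "T = monom 1 k" using poly1_1 by blast
    have "k \<noteq> 0" using k assms(2) by (metis monom_0 one_pCons)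
    then have "degree T \<ge> 1" using k by (simp add: degree_monom_eq)
    then show ?thesis using True dg by simp
  next
    case False
    then have "poly T 1 \<ge> 2" using vT by linarith
    then have "poly S 1 * poly T 1 \<ge> poly S 1 * 2" by (simp add: mult_le_mono2)
    moreover have "poly (S*T) 1 = poly S 1 * poly T 1" by simp
    ultimately show ?thesis using dg vS by linarith
  qed
qed

lemma exist: "Q \<noteq> 0 \<Longrightarrow> \<exists>A. (\<forall>x\<in>#A. irreducible_N1 x) \<and> prod_mset A = Q"
proof (induction "poly Q 1 + degree Q" arbitrary: Q rule: less_induct)
  case less
  show ?case
  proof (cases "Q = 1")
    case True
    then show ?thesis by (intro exI[of _ "{#}"]) simp
  next
    case False
    show ?thesis
    proof (cases "irreducible_N1 Q")
      case True
      then show ?thesis by (intro exI[of _ "{#Q#}"]) simp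
    next
      case nirr: False
      then obtain S T where ST: "Q = S * T" "S \<noteq> 1" "T \<noteq> 1"
        using less.prems False unfolding irreducible_N1_def by blast
      have "S \<noteq> 0" "T \<noteq> 0" using ST less.prems by auto
      have m1: "poly S 1 + degree S < poly Q 1 + degree Q"
        using measure_lt[OF \<open>S \<noteq> 0\<close> ST(3) \<open>T \<noteq> 0\<close>] ST(1) by simp
      have m2: "poly T 1 + degree T < poly Q 1 + degree Q"
        using measure_lt[OF \<open>T \<noteq> 0\<close> ST(2) \<open>S \<noteq> 0\<close>] ST(1) by (simp add: mult.commute)
      obtain A1 where A1: "\<forall>x\<in>#A1. irreducible_N1 x" "prod_mset A1 = S"
        using less.hyps[OF m1 \<open>S \<noteq> 0\<close>] by blast
      obtain A2 where A2: "\<forall>x\<in>#A2. irreducible_N1 x" "prod_mset A2 = T"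
        using less.hyps[OF m2 \<open>T \<noteq> 0\<close>] by blast
      show ?thesis using A1 A2 ST(1) by (intro exI[of _ "A1 + A2"]) auto
    qed
  qed
qed

lemma coeff_prod0: "(\<forall>x\<in>#M. coeff x 0 \<noteq> (0::nat)) \<Longrightarrow> coeff (prod_mset M) 0 \<noteq> 0"
  by (induction M) (auto simp: coeff_mult_0)

lemma decomp:
  assumes irr: "\<forall>Q\<in>#A. irreducible_N1 Q" and pr: "prod_mset A = P" and v9: "poly P 1 = 9"
  defines "A0 \<equiv> filter_mset (\<lambda>Q. Q \<noteq> monom 1 1) A"
  shows "A = replicate_mset (count A (monom 1 1)) (monom 1 1) + A0"
  and "P = monom 1 (count A (monom 1 1)) * prod_mset A0"
  and "coeff (prod_mset A0) 0 \<noteq> 0"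
  and "(\<exists>U. A0 = {#U#} \<and> irreducible_N1 U) \<or>
       (\<exists>S T. A0 = {#S,T#} \<and> poly S 1 = 3 \<and> poly T 1 = 3 \<and> coeff S 0 \<noteq> 0 \<and> coeff T 0 \<noteq> 0)"
proof -
  let ?m = "count A (monom 1 1)"
  have "A = filter_mset (\<lambda>Q. Q = monom 1 1) A + A0" unfolding A0_def by (rule multiset_partition)
  then show A: "A = replicate_mset ?m (monom 1 1) + A0"
    by (simp only: filter_eq_replicate_mset)
  have "prod_mset A = (monom 1 1) ^ ?m * prod_mset A0"
    by (subst A) simp
  then show P: "P = monom 1 ?m * prod_mset A0" using pr by (simp add: monom_power)
  have A0irr: "\<forall>Q\<in>#A0. irreducible_N1 Q \<and> Q \<noteq> monom 1 1" using irr unfolding A0_def by auto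
  then have c0: "\<forall>Q\<in>#A0. coeff Q 0 \<noteq> 0" using irr_const by blast
  then show "coeff (prod_mset A0) 0 \<noteq> 0" using coeff_prod0 by blast
  have V: "prod_mset (image_mset (\<lambda>p. poly p 1) A0) = 9"
    using v9 P poly_prod1[of A0] by (simp add: poly_monom)
  have ge3: "\<forall>Q\<in>#A0. poly Q 1 \<ge> 3"
  proof
    fix Q assume Q: "Q \<in># A0"
    then have "poly Q 1 \<ge> 2" using A0irr irr_val by blast
    moreover have "poly Q 1 dvd 9"
    proof -
      have "A0 = add_mset Q (A0 - {#Q#})" using Q by simp
      then have "prod_mset (image_mset (\<lambda>p. poly p 1) A0) = poly Q 1 * prod_mset (image_mset (\<lambda>p. poly p 1) (A0 - {#Q#}))"
        by (metis image_mset_add_mset prod_mset.add_mset)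
      then show ?thesis using V by (metis dvd_triv_left)
    qed
    ultimately show "poly Q 1 \<ge> 3"
      by (cases "poly Q 1 = 2") auto
  qed
  have "3 ^ size A0 \<le> (9::nat)" using pow_bound[OF ge3] V by simp
  then have sz: "size A0 \<le> 2"
  proof -
    assume h: "3 ^ size A0 \<le> (9::nat)"
    show ?thesis
    proof (rule ccontr)
      assume "\<not> size A0 \<le> 2"
      then have "(3::nat) ^ 3 \<le> 3 ^ size A0" by (intro power_increasing) auto
      then show False using h by simp
    qed
  qed
  have "size A0 \<noteq> 0" using V by auto
  show "(\<exists>U. A0 = {#U#} \<and> irreducible_N1 U) \<or>
       (\<exists>S T. A0 = {#S,T#} \<and> poly S 1 = 3 \<and> poly T 1 = 3 \<and> coeff S 0 \<noteq> 0 \<and> coeff T 0 \<noteq> 0)"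
  proof (cases "size A0 = 1")
    case True
    then obtain U where "A0 = {#U#}" using size_1_singleton_mset by blast
    then show ?thesis using A0irr by auto
  next
    case False
    then have "size A0 = Suc 1" using sz \<open>size A0 \<noteq> 0\<close> by linarith
    then obtain S N where SN: "A0 = add_mset S N" using size_eq_Suc_imp_eq_union by blast
    then have "size N = 1" using \<open>size A0 = Suc 1\<close> by simp
    then obtain T where "N = {#T#}" using size_1_singleton_mset by blast
    then have ST: "A0 = {#S,T#}" using SN by simp
    then have "poly S 1 * poly T 1 = 9" "poly S 1 \<ge> 3" "poly T 1 \<ge> 3" using V ge3 by auto
    then have "poly S 1 = 3 \<and> poly T 1 = 3"
    proof -
      have "poly S 1 \<le> 3"
      proof (rule ccontr)
        assume "\<not> poly S 1 \<le> 3"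
        then have "poly S 1 * poly T 1 \<ge> 4 * 3" using \<open>poly T 1 \<ge> 3\<close> by (intro mult_le_mono) auto
        then show False using \<open>poly S 1 * poly T 1 = 9\<close> by simp
      qed
      have "poly T 1 \<le> 3"
      proof (rule ccontr)
        assume "\<not> poly T 1 \<le> 3"
        then have "poly S 1 * poly T 1 \<ge> 3 * 4" using \<open>poly S 1 \<ge> 3\<close> by (intro mult_le_mono) auto
        then show False using \<open>poly S 1 * poly T 1 = 9\<close> by simp
      qed
      then show ?thesis using \<open>poly S 1 \<le> 3\<close> \<open>poly S 1 \<ge> 3\<close> \<open>poly T 1 \<ge> 3\<close> by simp
    qed
    then show ?thesis using ST c0 by auto
  qed
qed

lemma pm_inj: "pm M = pm N \<Longrightarrow> M = N"
  by (metis coeff_pm multiset_eqI)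

lemma pair0:
  assumes "a \<le> b" "c \<le> d" "a \<le> c" "a' \<le> b'" "c' \<le> d'" "a' \<le> c'"
    and "pm {#0,a,b#} * pm {#0,c,d#} = pm {#0,a',b'#} * pm {#0,c',d'#}"
  shows "{#pm {#0,a,b#}, pm {#0,c,d#}#} = {#pm {#0,a',b'#}, pm {#0,c',d'#}#}"
proof -
  have "{#0,a,b,c,d,a+c,a+d,b+c,b+d#} = {#0,a',b',c',d',a'+c',a'+d',b'+c',b'+d'#}"
    using assms(7) unfolding pm_mult by (rule pm_inj)
  from comb[OF assms(1-6) this] show ?thesis by (auto simp: add_mset_commute)
qed

lemma pair1:
  assumes "a \<le> b" "c \<le> d" "a' \<le> b'" "c' \<le> d'"
    and "pm {#0,a,b#} * pm {#0,c,d#} = pm {#0,a',b'#} * pm {#0,c',d'#}"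
  shows "{#pm {#0,a,b#}, pm {#0,c,d#}#} = {#pm {#0,a',b'#}, pm {#0,c',d'#}#}"
proof (cases "a \<le> c")
  case True
  show ?thesis
  proof (cases "a' \<le> c'")
    case True
    then show ?thesis using pair0 assms \<open>a \<le> c\<close> by blast
  next
    case False
    then have "c' \<le> a'" by simp
    have "{#pm {#0,a,b#}, pm {#0,c,d#}#} = {#pm {#0,c',d'#}, pm {#0,a',b'#}#}"
      using pair0[OF assms(1,2) \<open>a \<le> c\<close> assms(4,3) \<open>c' \<le> a'\<close>] assms(5) by (simp add: mult.commute)
    then show ?thesis by (simp add: add_mset_commute)
  qed
next
  case False
  then have ca: "c \<le> a" by simp
  show ?thesis
  proof (cases "a' \<le> c'")
    case True
    have "{#pm {#0,c,d#}, pm {#0,a,b#}#} = {#pm {#0,a',b'#}, pm {#0,c',d'#}#}"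
      using pair0[OF assms(2,1) ca assms(3,4) True] assms(5) by (simp add: mult.commute)
    then show ?thesis by (simp add: add_mset_commute)
  next
    case False
    then have "c' \<le> a'" by simp
    have "{#pm {#0,c,d#}, pm {#0,a,b#}#} = {#pm {#0,c',d'#}, pm {#0,a',b'#}#}"
      using pair0[OF assms(2,1) ca assms(4,3) \<open>c' \<le> a'\<close>] assms(5) by (simp add: mult.commute)
    then show ?thesis by (simp add: add_mset_commute)
  qed
qed

lemma pair:
  fixes S T S' T' :: "nat poly"
  assumes "poly S 1 = 3" "poly T 1 = 3" "coeff S 0 \<noteq> 0" "coeff T 0 \<noteq> 0"
    "poly S' 1 = 3" "poly T' 1 = 3" "coeff S' 0 \<noteq> 0" "coeff T' 0 \<noteq> 0"
    "S * T = S' * T'"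
  shows "{#S,T#} = {#S',T'#}"
proof -
  obtain a b where 1: "a \<le> b" "S = pm {#0,a,b#}" using poly1_3 assms(1,3) by blast
  obtain c d where 2: "c \<le> d" "T = pm {#0,c,d#}" using poly1_3 assms(2,4) by blast
  obtain a' b' where 3: "a' \<le> b'" "S' = pm {#0,a',b'#}" using poly1_3 assms(5,7) by blast
  obtain c' d' where 4: "c' \<le> d'" "T' = pm {#0,c',d'#}" using poly1_3 assms(6,8) by blast
  show ?thesis using pair1[OF 1(1) 2(1) 3(1) 4(1)] assms(9) 1 2 3 4 by simp
qed

lemma cancelX:
  assumes "monom 1 m * Q = monom 1 m' * (Q'::nat poly)" "coeff Q 0 \<noteq> 0" "coeff Q' 0 \<noteq> 0"
  shows "m = m' \<and> Q = Q'"
proof -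
  have cf: "\<And>k. coeff (monom 1 m * Q) k = coeff (monom 1 m' * Q') k" using assms(1) by simp
  have "m = m'"
  proof (rule ccontr)
    assume "m \<noteq> m'"
    then have "m < m' \<or> m' < m" by auto
    then show False
    proof
      assume "m < m'" then show False using cf[of m] assms(2) by (simp add: coeff_monom_mult)
    next
      assume "m' < m" then show False using cf[of m'] assms(3) by (simp add: coeff_monom_mult)
    qed
  qed
  moreover have "Q = Q'"
  proof (rule poly_eqI)
    fix k show "coeff Q k = coeff Q' k" using cf[of "k + m"] \<open>m = m'\<close> by (simp add: coeff_monom_mult)
  qed
  ultimately show ?thesis by blast
qed

theorem mainTheorem11:
  fixes P :: "nat poly"
  assumes "poly P 1 = 9"
  shows "(\<exists>A :: nat poly multiset. (\<forall>Q\<in>#A. irreducible_N1 Q) \<and> prod_mset A = P)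
       \<and> (\<forall>A B :: nat poly multiset.
            (\<forall>Q\<in>#A. irreducible_N1 Q) \<longrightarrow> (\<forall>Q\<in>#B. irreducible_N1 Q) \<longrightarrow>
            prod_mset A = P \<longrightarrow> prod_mset B = P \<longrightarrow> A = B)"
proof (intro conjI allI impI)
  have "P \<noteq> 0" using assms by auto
  then show "\<exists>A :: nat poly multiset. (\<forall>Q\<in>#A. irreducible_N1 Q) \<and> prod_mset A = P"
    using exist by blast
next
  fix A B :: "nat poly multiset"
  assume iA: "\<forall>Q\<in>#A. irreducible_N1 Q" and iB: "\<forall>Q\<in>#B. irreducible_N1 Q"
    and pA: "prod_mset A = P" and pB: "prod_mset B = P"
  define A0 where "A0 = filter_mset (\<lambda>Q. Q \<noteq> monom 1 1) A"
  define B0 where "B0 = filter_mset (\<lambda>Q. Q \<noteq> monom 1 1) B"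
  note dA = decomp[OF iA pA assms, folded A0_def]
  note dB = decomp[OF iB pB assms, folded B0_def]
  have "count A (monom 1 1) = count B (monom 1 1) \<and> prod_mset A0 = prod_mset B0"
    using cancelX[OF _ dA(3) dB(3)] dA(2) dB(2) by metis
  then have cnt: "count A (monom 1 1) = count B (monom 1 1)" and pr: "prod_mset A0 = prod_mset B0" by auto
  have "A0 = B0"
  proof -
    have no: False if "irreducible_N1 U" "U = S * T" "poly S 1 = 3" "poly T 1 = 3" for U S T
    proof -
      have "S = 1 \<or> T = 1" using that unfolding irreducible_N1_def by blast
      then show False using that by auto
    qed
    show ?thesis
      using dA(4) dB(4)
    proof (elim disjE exE conjE)
      fix U U' assume "A0 = {#U#}" "B0 = {#U'#}"
      then show ?thesis using pr by simp
    next
      fix U S T assume "A0 = {#U#}" "irreducible_N1 U" "B0 = {#S,T#}" "poly S 1 = 3" "poly T 1 = 3"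
      then show ?thesis using pr no by simp
    next
      fix U S T assume "B0 = {#U#}" "irreducible_N1 U" "A0 = {#S,T#}" "poly S 1 = 3" "poly T 1 = 3"
      then show ?thesis using pr no by (metis prod_mset.add_mset prod_mset_singleton)
    next
      fix S T S' T' assume "A0 = {#S,T#}" "B0 = {#S',T'#}"
        "poly S 1 = 3" "poly T 1 = 3" "coeff S 0 \<noteq> 0" "coeff T 0 \<noteq> 0"
        "poly S' 1 = 3" "poly T' 1 = 3" "coeff S' 0 \<noteq> 0" "coeff T' 0 \<noteq> 0"
      then show ?thesis using pr pair[of S T S' T'] by simp
    qed
  qed
  then show "A = B" using dA(1) dB(1) cnt by metis
qed

end
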